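(* There exists a set $\mathcal X$ of four points in $\mathbb R^3$ (with Euclidean distance) having a perfect $2$-clustering $\mathcal C=\{C_1,C_2\}$ that is a global minimizer of the $2$-means cost, i.e. $\sum_{i=1}^2\sum_{x\in C_i}\|x-\mu(C_i)\|^2\le \sum_{i=1}^2\sum_{x\in C_i'}\|x-\mu(C_i')\|^2$ for every $2$-clustering $\{C_1',C_2'\}$ of $\mathcal X$ (where $\mu(C)$ is the mean of $C$), but such that for every ordering of the four points, the final centers produced by sequential $2$-means run on that ordering do not induce $\mathcal C$ on $\mathcal X$.
   Context: A clustering of $\mathcal X$ is a set of nonempty, pairwise disjoint subsets whose union is $\mathcal X$; a $k$-clustering has exactly $k$ clusters. Write $x\sim_{\mathcal C}y$ if $x,y$ are in the same cluster and $x\not\sim_{\mathcal C}y$ otherwise. $\mathcal C$ is perfect if $\|x-y\|<\|w-z\|$ whenever $x\sim_{\mathcal C}y$ and $w\not\sim_{\mathcal C}z$. A list of points $T=(t_1,\ldots,t_m)$ induces the clustering of $\mathcal X$ in which each $x$ is assigned to the index $i$ minimizing $\|x-t_i\|$ (ties broken by smallest $i$), empty clusters discarded. Sequential $k$-means on input sequence $x_1,\ldots,x_N$ in $\mathbb R^p$ ($N\ge k$): set $t_i=x_i$ and $n_i=1$ for $i=1,\ldots,k$; then for each subsequent point $x$: let $i$ be the index of the closest center $t_i$ to $x$ (ties broken by smallest index), increment $n_i$, and replace $t_i$ by $t_i+(1/n_i)(x-t_i)$. The output is the final list $(t_1,\ldots,t_k)$. *)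

theory Defs
  imports "HOL-Analysis.Analysis"
begin

definition is_clustering :: "'a set \<Rightarrow> 'a set set \<Rightarrow> bool" where
  "is_clustering X C \<longleftrightarrow> (\<forall>c\<in>C. c \<noteq> {}) \<and>
     (\<forall>c\<in>C. \<forall>d\<in>C. c \<noteq> d \<longrightarrow> c \<inter> d = {}) \<and> \<Union>C = X"

definition same_cluster :: "'a set set \<Rightarrow> 'a \<Rightarrow> 'a \<Rightarrow> bool" where
  "same_cluster C x y \<longleftrightarrow> (\<exists>c\<in>C. x \<in> c \<and> y \<in> c)"

definition perfect_clustering :: "'a::metric_space set \<Rightarrow> 'a set set \<Rightarrow> bool" where
  "perfect_clustering X C \<longleftrightarrow>
     (\<forall>x\<in>X. \<forall>y\<in>X. \<forall>w\<in>X. \<forall>z\<in>X.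
        same_cluster C x y \<and> \<not> same_cluster C w z \<longrightarrow> dist x y < dist w z)"

definition cmean :: "'a::real_vector set \<Rightarrow> 'a" where
  "cmean c = (1 / real (card c)) *\<^sub>R (\<Sum>x\<in>c. x)"

definition kmeans_cost :: "'a::real_normed_vector set set \<Rightarrow> real" where
  "kmeans_cost C = (\<Sum>c\<in>C. \<Sum>x\<in>c. (norm (x - cmean c))\<^sup>2)"

definition closest_idx :: "'a::real_normed_vector list \<Rightarrow> 'a \<Rightarrow> nat" where
  "closest_idx T x = (LEAST i. i < length T \<and>
      (\<forall>j<length T. norm (x - T ! i) \<le> norm (x - T ! j)))"

definition induced_clustering :: "'a::real_normed_vector set \<Rightarrow> 'a list \<Rightarrow> 'a set set" where
  "induced_clustering X T =
     (\<lambda>i. {x\<in>X. closest_idx T x = i}) ` {..<length T} - {{}}"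

definition seq_step :: "'a::real_normed_vector list \<times> nat list \<Rightarrow> 'a \<Rightarrow> 'a list \<times> nat list" where
  "seq_step s x = (let T = fst s; n = snd s; i = closest_idx T x; ni = n ! i + 1
     in (T[i := T ! i + (1 / real ni) *\<^sub>R (x - T ! i)], n[i := ni]))"

text \<open>Sequential k-means on the input sequence xs (assumed length xs \<ge> k).\<close>
definition seq_kmeans :: "nat \<Rightarrow> 'a::real_normed_vector list \<Rightarrow> 'a list" where
  "seq_kmeans k xs = fst (foldl seq_step (take k xs, replicate k 1) (drop k xs))"

end

theory Submission
  imports Defs
begin

definition mk :: "real \<Rightarrow> real \<Rightarrow> real \<Rightarrow> real^3" where "mk x y z = vector [x,y,z]"
lemma mk_comp[simp]: "mk x y z $ 1 = x" "mk x y z $ 2 = y" "mk x y z $ 3 = z"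
  by (simp_all add: mk_def)
lemma mk_eq[simp]: "mk a b c = mk d e f \<longleftrightarrow> a = d \<and> b = e \<and> c = f"
  by (auto simp: vec_eq_iff forall_3)
lemma mk_diff[simp]: "mk a b c - mk d e f = mk (a-d) (b-e) (c-f)"
  by (simp add: vec_eq_iff forall_3)
lemma mk_add[simp]: "mk a b c + mk d e f = mk (a+d) (b+e) (c+f)"
  by (simp add: vec_eq_iff forall_3)
lemma mk_scale[simp]: "r *\<^sub>R mk a b c = mk (r*a) (r*b) (r*c)"
  by (simp add: vec_eq_iff forall_3)
lemma norm_mk_sq[simp]: "(norm (mk a b c))^2 = a^2+b^2+c^2"
  unfolding power2_norm_eq_inner by (simp add: inner_vec_def sum_3 power2_eq_square)
lemma norm_mk_le[simp]: "norm (mk a b c) \<le> norm (mk d e f) \<longleftrightarrow> a^2+b^2+c^2 \<le> d^2+e^2+f^2"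
  by (metis norm_ge_zero norm_mk_sq power2_le_iff_abs_le abs_norm_cancel)

lemma mk_eq0[simp]: "mk a b c = 0 \<longleftrightarrow> a = 0 \<and> b = 0 \<and> c = 0"
  by (auto simp: vec_eq_iff forall_3)
lemma norm_mk_less[simp]: "norm (mk a b c) < norm (mk d e f) \<longleftrightarrow> a^2+b^2+c^2 < d^2+e^2+f^2"
  by (meson norm_mk_le not_le)
lemma norm_mk_le0[simp]: "norm (mk a b c) \<le> 0 \<longleftrightarrow> a = 0 \<and> b = 0 \<and> c = 0"
  by simp

lemma closest2: "closest_idx [t0,t1] x = (if norm (x-t0) \<le> norm (x-t1) then 0 else 1)"
proof (cases "norm (x-t0) \<le> norm (x-t1)")
  case True
  then show ?thesis unfolding closest_idx_def
    by (intro Least_equality) (auto simp: less_Suc_eq)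
next
  case False
  then show ?thesis unfolding closest_idx_def
    by (intro Least_equality) (auto simp: less_Suc_eq)
qed

lemma step2: "seq_step ([t0,t1],[n0,n1]) x = (if norm (x-t0) \<le> norm (x-t1)
   then ([t0 + (1 / real (n0+1)) *\<^sub>R (x - t0), t1], [n0+1,n1])
   else ([t0, t1 + (1 / real (n1+1)) *\<^sub>R (x - t1)], [n0,n1+1]))"
  by (simp add: seq_step_def closest2 Let_def)

lemma kmeans4: "seq_kmeans 2 [p1,p2,p3,p4] = fst (seq_step (seq_step ([p1,p2],[1,1]) p3) p4)"
  by (simp add: seq_kmeans_def numeral_2_eq_2)

lemma induced2: "induced_clustering X [t0,t1] =
   {{x\<in>X. norm (x-t0) \<le> norm (x-t1)}, {x\<in>X. \<not> norm (x-t0) \<le> norm (x-t1)}} - {{}}"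
  unfolding induced_clustering_def
  by (auto simp: closest2 lessThan_nat_numeral)

lemma induced_ne:
  assumes "\<not> (Q a = Q b \<and> Q c = Q d \<and> Q a \<noteq> Q c)"
    and "Q = (\<lambda>x. norm (x-t0) \<le> norm (x-t1))"
    and "X = {a,b,c,d}" "distinct [a,b,c,d]"
  shows "induced_clustering X [t0,t1] \<noteq> {{a,b},{c,d}}"
proof
  assume h: "induced_clustering X [t0,t1] = {{a,b},{c,d}}"
  have "{a,b} \<in> induced_clustering X [t0,t1]" using h by simp
  then have "{a,b} = {x\<in>X. Q x} \<or> {a,b} = {x\<in>X. \<not> Q x}"
    unfolding induced2 assms(2) by auto
  moreover have "Q a \<and> Q b \<and> \<not> Q c \<and> \<not> Q d" if "{a,b} = {x\<in>X. Q x}"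
  proof -
    have "a \<in> {x\<in>X. Q x}" "b \<in> {x\<in>X. Q x}" using that by auto
    moreover have "c \<notin> {x\<in>X. Q x}" "d \<notin> {x\<in>X. Q x}" using that assms(4) by auto
    ultimately show ?thesis using assms(3) by auto
  qed
  moreover have "\<not>Q a \<and> \<not>Q b \<and> Q c \<and> Q d" if "{a,b} = {x\<in>X. \<not>Q x}"
  proof -
    have "a \<in> {x\<in>X. \<not>Q x}" "b \<in> {x\<in>X. \<not>Q x}" using that by auto
    moreover have "c \<notin> {x\<in>X. \<not>Q x}" "d \<notin> {x\<in>X. \<not>Q x}" using that assms(4) by auto
    ultimately show ?thesis using assms(3) by auto
  qed
  ultimately show False using assms(1) by auto
qed

definition QQ :: "(real^3) list \<Rightarrow> real^3 \<Rightarrow> bool" where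
  "QQ T x = (norm (x - T!0) \<le> norm (x - T!1))"

lemma len_step: "length (fst (seq_step s x)) = length (fst s)"
  by (simp add: seq_step_def Let_def)

abbreviation "pa \<equiv> mk 2 0 0"
abbreviation "pb \<equiv> mk (-2) 0 0"
abbreviation "pc \<equiv> mk 0 2 3"
abbreviation "pd \<equiv> mk 0 (-2) 3"

definition good :: "(real^3) list \<Rightarrow> bool" where
 "good T = (\<not> (QQ T pa = QQ T pb \<and> QQ T pc = QQ T pd \<and> QQ T pa \<noteq> QQ T pc))"

lemma allgood: "\<forall>xs\<in>{[pa,pb,pc,pd], [pa,pb,pd,pc], [pa,pc,pb,pd], [pa,pc,pd,pb], [pa,pd,pb,pc], [pa,pd,pc,pb], [pb,pa,pc,pd], [pb,pa,pd,pc], [pb,pc,pa,pd], [pb,pc,pd,pa], [pb,pd,pa,pc], [pb,pd,pc,pa], [pc,pa,pb,pd], [pc,pa,pd,pb], [pc,pb,pa,pd], [pc,pb,pd,pa], [pc,pd,pa,pb], [pc,pd,pb,pa], [pd,pa,pb,pc], [pd,pa,pc,pb], [pd,pb,pa,pc], [pd,pb,pc,pa], [pd,pc,pa,pb], [pd,pc,pb,pa]}. good (seq_kmeans 2 xs)"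
  by (simp add: kmeans4 step2 QQ_def good_def power2_eq_square)

lemma perm4:
  assumes "distinct xs" "set xs = {a,b,c,d}" "distinct [a,b,c,d]"
  shows "xs \<in> {[a,b,c,d], [a,b,d,c], [a,c,b,d], [a,c,d,b], [a,d,b,c], [a,d,c,b], [b,a,c,d], [b,a,d,c], [b,c,a,d], [b,c,d,a], [b,d,a,c], [b,d,c,a], [c,a,b,d], [c,a,d,b], [c,b,a,d], [c,b,d,a], [c,d,a,b], [c,d,b,a], [d,a,b,c], [d,a,c,b], [d,b,a,c], [d,b,c,a], [d,c,a,b], [d,c,b,a]}"
proof -
  have "length xs = 4" using assms distinct_card by fastforce
  then obtain x1 x2 x3 x4 where xs: "xs = [x1,x2,x3,x4]"
    by (auto simp: length_Suc_conv numeral_eq_Suc)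
  have m: "x1 \<in> {a,b,c,d}" "x2 \<in> {a,b,c,d}" "x3 \<in> {a,b,c,d}" "x4 \<in> {a,b,c,d}"
    using assms(2) unfolding xs by auto
  have dd: "distinct [x1,x2,x3,x4]" using assms(1) xs by simp
  show ?thesis using m dd assms(3) unfolding xs insert_iff empty_iff
    by (elim disjE) simp_all
qed

lemma pair_identity:
  fixes c :: "'a::real_inner set"
  assumes "finite c" "c \<noteq> {}"
  shows "(\<Sum>x\<in>c. \<Sum>y\<in>c. (norm (x-y))^2) = 2 * real (card c) * (\<Sum>x\<in>c. (norm (x - cmean c))^2)"
proof -
  define m where "m = cmean c"
  have n0: "real (card c) \<noteq> 0" using assms by simp
  have s0: "(\<Sum>y\<in>c. y - m) = 0"
    using n0 by (simp add: sum_subtractf m_def cmean_def sum_constant_scaleR)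
  have e: "(norm (x-y))^2 = (norm (x-m))^2 + (norm (y-m))^2 - 2 * ((x-m) \<bullet> (y-m))" for x y
    using dot_norm_neg[of "x-m" "y-m"] by simp
  have "(\<Sum>x\<in>c. \<Sum>y\<in>c. (norm (x-y))^2) =
     (\<Sum>x\<in>c. \<Sum>y\<in>c. (norm (x-m))^2 + (norm (y-m))^2 - 2 * ((x-m) \<bullet> (y-m)))"
    by (intro sum.cong refl) (rule e)
  also have "\<dots> = (\<Sum>x\<in>c. real (card c) * (norm (x-m))^2 + (\<Sum>y\<in>c. (norm (y-m))^2) - 2 * (\<Sum>y\<in>c. (x-m) \<bullet> (y-m)))"
    by (simp add: sum.distrib sum_subtractf sum_distrib_left)
  also have "\<dots> = (\<Sum>x\<in>c. real (card c) * (norm (x-m))^2 + (\<Sum>y\<in>c. (norm (y-m))^2))"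
  proof -
    have "(\<Sum>y\<in>c. (x-m) \<bullet> (y-m)) = 0" for x
      by (metis inner_sum_right inner_zero_right s0)
    then show ?thesis by simp
  qed
  also have "\<dots> = 2 * real (card c) * (\<Sum>x\<in>c. (norm (x - m))^2)"
    by (simp add: sum.distrib sum_distrib_left[symmetric])
  finally show ?thesis by (simp add: m_def)
qed

lemma cluster_lb:
  fixes c :: "'a::real_inner set"
  assumes "finite c" "c \<noteq> {}" "\<forall>x\<in>c. \<forall>y\<in>c. x \<noteq> y \<longrightarrow> L \<le> (norm (x-y))^2"
  shows "(real (card c) - 1) * L / 2 \<le> (\<Sum>x\<in>c. (norm (x - cmean c))^2)"
proof -
  have "(\<Sum>x\<in>c. \<Sum>y\<in>c. (norm (x-y))^2) \<ge> (\<Sum>x\<in>c. (real (card c) - 1) * L)"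
  proof (rule sum_mono)
    fix x assume x: "x \<in> c"
    have "card c \<ge> 1" using x assms(1) by (metis One_nat_def Suc_leI card_gt_0_iff empty_iff)
    then have cc: "real (card (c - {x})) = real (card c) - 1" using x assms(1) by (simp add: of_nat_diff)
    have "(\<Sum>y\<in>c. (norm (x-y))^2) = (\<Sum>y\<in>c-{x}. (norm (x-y))^2)"
      using x assms(1) by (simp add: sum.remove)
    moreover have "(\<Sum>y\<in>c-{x}. L) \<le> (\<Sum>y\<in>c-{x}. (norm (x-y))^2)" using assms(3) x by (intro sum_mono) auto
    moreover have "(\<Sum>y\<in>c-{x}. L) = (real (card c) - 1) * L" using cc by simp
    ultimately show "(real (card c) - 1) * L \<le> (\<Sum>y\<in>c. (norm (x-y))^2)" by linarith
  qed
  then have "real (card c) * ((real (card c) - 1) * L) \<le> 2 * real (card c) * (\<Sum>x\<in>c. (norm (x - cmean c))^2)"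
    using pair_identity[OF assms(1,2)] by simp
  moreover have "real (card c) > 0" using assms by (simp add: card_gt_0_iff)
  ultimately show ?thesis by (simp add: mult.assoc)
qed

lemma len_fold: "length (fst (foldl seq_step s ys)) = length (fst s)"
  by (induction ys arbitrary: s) (simp_all add: len_step)

lemma cost_lb:
  fixes X :: "'a::real_inner set"
  assumes cl: "is_clustering X C'" and fin: "finite X"
    and L: "\<forall>x\<in>X. \<forall>y\<in>X. x \<noteq> y \<longrightarrow> L \<le> (norm (x-y))^2"
  shows "(real (card X) - real (card C')) * L / 2 \<le> kmeans_cost C'"
proof -
  have ne: "\<forall>c\<in>C'. c \<noteq> {}" and dj: "\<forall>c\<in>C'. \<forall>d\<in>C'. c \<noteq> d \<longrightarrow> c \<inter> d = {}"
    and un: "\<Union>C' = X" using cl by (auto simp: is_clustering_def)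
  have finC: "finite C'" using un fin by (metis finite_UnionD)
  have finc: "\<And>c. c \<in> C' \<Longrightarrow> finite c" using un fin by (metis Union_upper finite_subset)
  have "card X = sum card C'" unfolding un[symmetric]
    by (rule card_Union_disjoint) (use dj finc in \<open>auto simp: pairwise_def disjnt_def\<close>)
  then have "(real (card X) - real (card C')) * L / 2 = (\<Sum>c\<in>C'. (real (card c) - 1) * L / 2)"
    by (simp add: sum_subtractf sum_divide_distrib[symmetric] sum_distrib_right[symmetric])
  also have "\<dots> \<le> kmeans_cost C'" unfolding kmeans_cost_def
  proof (rule sum_mono)
    fix c assume c: "c \<in> C'"
    show "(real (card c) - 1) * L / 2 \<le> (\<Sum>x\<in>c. (norm (x - cmean c))^2)"
      by (rule cluster_lb) (use c finc ne L un in auto)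
  qed
  finally show ?thesis .
qed

theorem mainTheorem6:
  shows "\<exists>X :: (real^3) set. card X = 4 \<and>
    (\<exists>C. is_clustering X C \<and> card C = 2 \<and> perfect_clustering X C \<and>
       (\<forall>C'. is_clustering X C' \<and> card C' = 2 \<longrightarrow> kmeans_cost C \<le> kmeans_cost C') \<and>
       (\<forall>xs. distinct xs \<and> set xs = X \<longrightarrow> induced_clustering X (seq_kmeans 2 xs) \<noteq> C))"
proof (intro exI conjI)
  let ?X = "{pa,pb,pc,pd}"
  let ?C = "{{pa,pb},{pc,pd}}"
  have dX: "distinct [pa,pb,pc,pd]" by simp
  show "card ?X = 4" by simp
  show "is_clustering ?X ?C" unfolding is_clustering_def by auto
  have neq: "{pa,pb} \<noteq> {pc,pd}" by (auto simp: doubleton_eq_iff)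
  show "card ?C = 2" using neq by simp
  show "perfect_clustering ?X ?C"
    unfolding perfect_clustering_def same_cluster_def dist_norm
    by (simp add: power2_eq_square)
  show "\<forall>C'. is_clustering ?X C' \<and> card C' = 2 \<longrightarrow> kmeans_cost ?C \<le> kmeans_cost C'"
  proof (intro allI impI)
    fix C' assume h: "is_clustering ?X C' \<and> card C' = 2"
    have L: "\<forall>x\<in>?X. \<forall>y\<in>?X. x \<noteq> y \<longrightarrow> 16 \<le> (norm (x-y))^2"
      by simp
    have "(real (card ?X) - real (card C')) * 16 / 2 \<le> kmeans_cost C'"
      using cost_lb[OF _ _ L, of C'] h by simp
    moreover have "kmeans_cost ?C = 16"
      using neq by (simp add: kmeans_cost_def cmean_def)
    moreover have "card ?X = 4" by simp
    ultimately show "kmeans_cost ?C \<le> kmeans_cost C'" using h by simp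
  qed
  show "\<forall>xs. distinct xs \<and> set xs = ?X \<longrightarrow> induced_clustering ?X (seq_kmeans 2 xs) \<noteq> ?C"
  proof (intro allI impI)
    fix xs assume h: "distinct xs \<and> set xs = ?X"
    have g: "good (seq_kmeans 2 xs)"
      by (rule bspec[OF allgood perm4[OF conjunct1[OF h] conjunct2[OF h] dX]])
    have l4: "length xs = 4" using h dX distinct_card by fastforce
    have "length (seq_kmeans 2 xs) = 2" using l4 by (simp add: seq_kmeans_def len_fold)
    then obtain t0 t1 where T: "seq_kmeans 2 xs = [t0,t1]"
      by (auto simp: length_Suc_conv numeral_eq_Suc)
    show "induced_clustering ?X (seq_kmeans 2 xs) \<noteq> ?C" unfolding T
      by (rule induced_ne[OF _ refl refl dX]) (use g T in \<open>simp add: good_def QQ_def\<close>)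
  qed
qed

end
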